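(* Let $\nu\in(0,1]$, $\varrho>0$, $\delta>0$ and $x\in K_\nu^\varrho$. Let $g^\delta\in\mathbb Y$ satisfy $\|g^\delta-Ax\|_{\mathbb Y}\le\delta$, let $\alpha>0$ and $\hat x_\alpha\in R_\alpha(g^\delta)$. 1. (a priori rule) Let $c_r\ge c_l>0$. If $c_l\varrho^{-1/\nu}\delta^{1/\nu}\le\alpha\le c_r\varrho^{-1/\nu}\delta^{1/\nu}$, then $L(x,\hat x_\alpha)\le\Omega(c_1\delta,K_\nu^{c_2\varrho})$ with $c_1:=1+c_r^\nu$ and $c_2:=2+c_l^{-\nu}$. 2. (discrepancy principle) Let $C_D>c_D>1$. If $c_D\delta\le\|g^\delta-A\hat x_\alpha\|_{\mathbb Y}\le C_D\delta$, then $L(x,\hat x_\alpha)\le\Omega(d_1\delta,K_\nu^{d_2\varrho})$ with $d_1:=1+C_D$ and $d_2:=2+(c_D-1)^{-1}$.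
   Context: Standing setting: $\mathbb X$ is a real Banach space and $\tau$ is a topology on $\mathbb X$ such that $(\mathbb X,\tau)$ is a locally convex Hausdorff space. $\mathcal R:\mathbb X\to(-\infty,\infty]$ is proper and convex, and for every $\lambda\in\mathbb R$ the sublevel set $\{x\in\mathbb X:\mathcal R(x)\le\lambda\}$ is $\tau$-compact. $\mathbb Y$ is a real Hilbert space and $A:\mathbb X\to\mathbb Y$ is linear and continuous from $(\mathbb X,\tau)$ to $\mathbb Y$ equipped with its weak topology. For $\alpha>0$, $g\in\mathbb Y$ and $x\in\mathrm{dom}(\mathcal R)$ let $T_\alpha(x,g):=\frac1{2\alpha}\|g-Ax\|_{\mathbb Y}^2+\mathcal R(x)$ and $R_\alpha(g):=\operatorname{argmin}_{x\in\mathrm{dom}(\mathcal R)}T_\alpha(x,g)$ (a nonempty set). For $\nu\ge0$ define $\varrho_\nu:\mathbb X\to[0,\infty]$ by $\varrho_\nu(x):=\sup\{\alpha^{-\nu}\|Ax-Ax_\alpha\|_{\mathbb Y}:\alpha>0,\ x_\alpha\in R_\alpha(Ax)\}$, and for $\varrho>0$ set $K_\nu^\varrho:=\{x\in\mathbb X:\varrho_\nu(x)\le\varrho\}$ and $K_\nu:=\{x\in\mathbb X:\varrho_\nu(x)<\infty\}$. Let $L:\mathbb X\times\mathbb X\to[0,\infty]$ satisfy the triangle inequality $L(x,z)\le L(x,y)+L(y,z)$. For $K\subset\mathbb X$ and $\delta>0$ the modulus of continuity is $\Omega(\delta,K):=\sup\{L(x_1,x_2):x_1,x_2\in K,\ \|Ax_1-Ax_2\|_{\mathbb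 Y}\le\delta\}$. *)

theory Defs
  imports "HOL-Analysis.Analysis"
begin

definition weak_topology :: "('y::real_inner) topology" where
  "weak_topology = topology_generated_by {{y. y \<bullet> v \<in> U} | v U. open U}"

definition lc_hausdorff_tvs :: "('x::real_vector) topology \<Rightarrow> bool" where
  "lc_hausdorff_tvs \<tau> \<longleftrightarrow>
     topspace \<tau> = UNIV \<and> Hausdorff_space \<tau> \<and>
     continuous_map (prod_topology \<tau> \<tau>) \<tau> (\<lambda>(x, y). x + y) \<and>
     continuous_map (prod_topology euclideanreal \<tau>) \<tau> (\<lambda>(a, x). a *\<^sub>R x) \<and>
     (\<forall>U. openin \<tau> U \<and> 0 \<in> U \<longrightarrow> (\<exists>V. openin \<tau> V \<and> 0 \<in> V \<and> convex V \<and> V \<subseteq> U))"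

definition proper_convex :: "('x::real_vector \<Rightarrow> ereal) \<Rightarrow> bool" where
  "proper_convex R \<longleftrightarrow>
     (\<forall>x. R x > -\<infinity>) \<and> (\<exists>x. R x < \<infinity>) \<and>
     (\<forall>x y t. 0 \<le> t \<and> t \<le> 1 \<longrightarrow>
        R (t *\<^sub>R x + (1 - t) *\<^sub>R y) \<le> ereal t * R x + ereal (1 - t) * R y)"

definition domR :: "('x \<Rightarrow> ereal) \<Rightarrow> 'x set" where
  "domR R = {x. R x < \<infinity>}"

definition Tfun :: "('x \<Rightarrow> 'y::real_normed_vector) \<Rightarrow> ('x \<Rightarrow> ereal) \<Rightarrow> real \<Rightarrow> 'x \<Rightarrow> 'y \<Rightarrow> ereal" where
  "Tfun A R \<alpha> x g = ereal (1 / (2 * \<alpha>) * (norm (g - A x))\<^sup>2) + R x"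

definition Rset :: "('x \<Rightarrow> 'y::real_normed_vector) \<Rightarrow> ('x \<Rightarrow> ereal) \<Rightarrow> real \<Rightarrow> 'y \<Rightarrow> 'x set" where
  "Rset A R \<alpha> g = {x \<in> domR R. \<forall>z \<in> domR R. Tfun A R \<alpha> x g \<le> Tfun A R \<alpha> z g}"

definition rho_nu :: "('x \<Rightarrow> 'y::real_normed_vector) \<Rightarrow> ('x \<Rightarrow> ereal) \<Rightarrow> real \<Rightarrow> 'x \<Rightarrow> ereal" where
  "rho_nu A R \<nu> x = Sup {ereal (\<alpha> powr (-\<nu>) * norm (A x - A xa)) | \<alpha> xa. \<alpha> > 0 \<and> xa \<in> Rset A R \<alpha> (A x)}"

definition Kset :: "('x \<Rightarrow> 'y::real_normed_vector) \<Rightarrow> ('x \<Rightarrow> ereal) \<Rightarrow> real \<Rightarrow> real \<Rightarrow> 'x set" where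
  "Kset A R \<nu> \<rho> = {x. rho_nu A R \<nu> x \<le> ereal \<rho>}"

definition modulus :: "('x \<Rightarrow> 'x \<Rightarrow> ereal) \<Rightarrow> ('x \<Rightarrow> 'y::real_normed_vector) \<Rightarrow> real \<Rightarrow> 'x set \<Rightarrow> ereal" where
  "modulus L A \<delta> K = Sup {L x1 x2 | x1 x2. x1 \<in> K \<and> x2 \<in> K \<and> norm (A x1 - A x2) \<le> \<delta>}"

end

theory Submission
  imports Defs
begin

lemma eps: fixes X Y C :: real assumes "C \<ge> 0" "\<And>t. 0 < t \<Longrightarrow> t \<le> 1 \<Longrightarrow> X \<le> Y + t * C" shows "X \<le> Y"
proof (rule ccontr)
  assume "\<not> X \<le> Y"
  define t where "t = min 1 ((X - Y) / (2*C + 1))"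
  have t: "0 < t" "t \<le> 1" using \<open>\<not> X \<le> Y\<close> assms(1) by (auto simp: t_def)
  have "t * C \<le> (X - Y) / (2*C + 1) * C" using assms(1) by (intro mult_right_mono) (auto simp: t_def)
  also have "\<dots> = (X - Y) * (C / (2*C + 1))" by simp
  also have "\<dots> < (X - Y) * 1"
    using \<open>\<not> X \<le> Y\<close> assms(1) by (intro mult_strict_left_mono) auto
  finally have "t * C < X - Y" by simp
  then show False using assms(2)[OF t] by linarith
qed

lemma fin_dom:
  assumes "proper_convex R" "z \<in> domR R"
  obtains r where "R z = ereal r"
  using assms unfolding proper_convex_def domR_def
  by (cases "R z") auto

lemma VI:
  fixes A :: "'x::real_vector \<Rightarrow> 'y::real_inner"
  assumes Rpc: "proper_convex R" and Alin: "linear A" and a: "0 < a"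
    and u: "u \<in> Rset A R a g" and z: "z \<in> domR R"
  shows "real_of_ereal (R u) - real_of_ereal (R z) \<le> (1/a) * ((g - A u) \<bullet> (A u - A z))"
proof -
  have ud: "u \<in> domR R" using u by (simp add: Rset_def)
  obtain ru where ru: "R u = ereal ru" using fin_dom[OF Rpc ud] by blast
  obtain rz where rz: "R z = ereal rz" using fin_dom[OF Rpc z] by blast
  define e where "e = g - A u"
  define d where "d = A z - A u"
  have H: "ru - rz \<le> (1/a) * (e \<bullet> (- d)) + t * ((1/(2*a)) * (d \<bullet> d))" if t: "0 < t" "t \<le> 1" for t
  proof -
    define zt where "zt = t *\<^sub>R z + (1 - t) *\<^sub>R u"
    have "R zt \<le> ereal t * R z + ereal (1 - t) * R u"
      using Rpc t unfolding proper_convex_def zt_def by auto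
    also have "\<dots> = ereal (t * rz + (1 - t) * ru)" by (simp add: ru rz)
    finally have Rzt: "R zt \<le> ereal (t * rz + (1 - t) * ru)" .
    then have "zt \<in> domR R" by (auto simp: domR_def)
    then have "Tfun A R a u g \<le> Tfun A R a zt g" using u by (auto simp: Rset_def)
    also have "\<dots> \<le> ereal (1 / (2 * a) * (norm (g - A zt))\<^sup>2) + ereal (t * rz + (1 - t) * ru)"
      unfolding Tfun_def using Rzt by (rule add_left_mono)
    finally have "1 / (2 * a) * (norm (g - A u))\<^sup>2 + ru \<le> 1 / (2 * a) * (norm (g - A zt))\<^sup>2 + (t * rz + (1 - t) * ru)"
      by (simp add: Tfun_def ru)
    moreover have "g - A zt = e - t *\<^sub>R d"
    proof -
      have "A zt = t *\<^sub>R A z + (1 - t) *\<^sub>R A u"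
        by (simp only: zt_def linear_add[OF Alin] linear_scale[OF Alin])
      then show ?thesis by (simp add: e_def d_def algebra_simps)
    qed
    moreover have "(norm (e - t *\<^sub>R d))\<^sup>2 = e \<bullet> e - 2 * t * (e \<bullet> d) + t^2 * (d \<bullet> d)"
      unfolding power2_norm_eq_inner by (simp add: inner_diff_left inner_diff_right inner_commute algebra_simps power2_eq_square)
    ultimately have "1 / (2 * a) * (e \<bullet> e) + ru \<le> 1 / (2 * a) * (e \<bullet> e - 2 * t * (e \<bullet> d) + t^2 * (d \<bullet> d)) + (t * rz + (1 - t) * ru)"
      by (simp add: e_def power2_norm_eq_inner)
    moreover have "1 / (2 * a) * (e \<bullet> e - 2 * t * (e \<bullet> d) + t^2 * (d \<bullet> d)) = 1/(2*a)*(e \<bullet> e) - t*((1/a)*(e \<bullet> d)) + t*(t*((1/(2*a))*(d \<bullet> d)))"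
      using a by (simp add: field_simps power2_eq_square)
    moreover have "t * ((1/a) * (e \<bullet> (- d)) + t * ((1/(2*a)) * (d \<bullet> d))) = - (t*((1/a)*(e \<bullet> d))) + t*(t*((1/(2*a))*(d \<bullet> d)))"
      by (simp add: algebra_simps)
    moreover have "t * (ru - rz) = t * ru - t * rz" "(1 - t) * ru = ru - t * ru" by (simp_all add: algebra_simps)
    ultimately have "t * (ru - rz) \<le> t * ((1/a) * (e \<bullet> (- d)) + t * ((1/(2*a)) * (d \<bullet> d)))"
      by linarith
    then show ?thesis using t by simp
  qed
  have C: "0 \<le> (1/(2*a)) * (d \<bullet> d)" using a by simp
  have "ru - rz \<le> (1/a) * (e \<bullet> (- d))"
    by (rule eps[OF C H])
  then show ?thesis by (simp add: ru rz e_def d_def)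
qed

lemma inner_aux:
  fixes p q :: "'y::real_inner"
  assumes "q \<bullet> q \<le> p \<bullet> q"
  shows "norm (p - q) \<le> norm p" "norm q \<le> norm p"
proof -
  have "(norm (p - q))\<^sup>2 = p \<bullet> p - 2 * (p \<bullet> q) + q \<bullet> q"
    unfolding power2_norm_eq_inner by (simp add: inner_diff_left inner_diff_right inner_commute)
  also have "\<dots> \<le> p \<bullet> p" using assms inner_ge_zero[of q] by linarith
  also have "\<dots> = (norm p)\<^sup>2" by (simp add: power2_norm_eq_inner)
  finally show "norm (p - q) \<le> norm p" using power2_le_imp_le by fastforce
  have "(norm q)\<^sup>2 \<le> norm p * norm q"
    using assms norm_cauchy_schwarz[of p q] by (simp add: power2_norm_eq_inner)
  then show "norm q \<le> norm p"
    by (metis mult_le_cancel_right norm_ge_zero power2_eq_square linorder_not_le mult_eq_0_iff order.trans)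
qed

lemma FNE:
  fixes A :: "'x::real_vector \<Rightarrow> 'y::real_inner"
  assumes Rpc: "proper_convex R" and Alin: "linear A" and b: "0 < b"
    and u: "u \<in> Rset A R b g1" and w: "w \<in> Rset A R b g2"
  shows "norm ((g1 - A u) - (g2 - A w)) \<le> norm (g1 - g2)" "norm (A u - A w) \<le> norm (g1 - g2)"
proof -
  have ud: "u \<in> domR R" using u by (simp add: Rset_def)
  have wd: "w \<in> domR R" using w by (simp add: Rset_def)
  have 1: "real_of_ereal (R u) - real_of_ereal (R w) \<le> (1/b) * ((g1 - A u) \<bullet> (A u - A w))"
    by (rule VI[OF Rpc Alin b u wd])
  have 2: "real_of_ereal (R w) - real_of_ereal (R u) \<le> (1/b) * ((g2 - A w) \<bullet> (A w - A u))"
    by (rule VI[OF Rpc Alin b w ud])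
  define q where "q = A u - A w"
  define p where "p = g1 - g2"
  have "0 \<le> (1/b) * ((g1 - A u) \<bullet> q) + (1/b) * ((g2 - A w) \<bullet> (- q))"
    using 1 2 unfolding q_def by (simp add: inner_diff_right) 
  then have "0 \<le> (1/b) * ((g1 - A u) \<bullet> q - (g2 - A w) \<bullet> q)" by (simp add: algebra_simps)
  then have "0 \<le> (g1 - A u) \<bullet> q - (g2 - A w) \<bullet> q" using b by (auto simp: zero_le_divide_iff)
  then have "0 \<le> (p - q) \<bullet> q" unfolding p_def q_def by (simp add: inner_diff_left algebra_simps)
  then have "q \<bullet> q \<le> p \<bullet> q" by (simp add: inner_diff_left)
  note inner_aux[OF this]
  then show "norm ((g1 - A u) - (g2 - A w)) \<le> norm (g1 - g2)" "norm (A u - A w) \<le> norm (g1 - g2)"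
    unfolding p_def q_def by (simp_all add: algebra_simps)
qed

lemma E1:
  fixes A :: "'x::real_vector \<Rightarrow> 'y::real_inner"
  assumes Rpc: "proper_convex R" and Alin: "linear A" and a: "0 < a" and b: "0 < b"
    and xh: "xh \<in> Rset A R a g" and u: "u \<in> Rset A R b (A xh)"
  shows "norm (A xh - A u) \<le> (b / a) * norm (g - A xh)"
proof -
  have ud: "u \<in> domR R" using u by (simp add: Rset_def)
  have xd: "xh \<in> domR R" using xh by (simp add: Rset_def)
  have 1: "real_of_ereal (R xh) - real_of_ereal (R u) \<le> (1/a) * ((g - A xh) \<bullet> (A xh - A u))"
    by (rule VI[OF Rpc Alin a xh ud])
  have 2: "real_of_ereal (R u) - real_of_ereal (R xh) \<le> (1/b) * ((A xh - A u) \<bullet> (A u - A xh))"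
    by (rule VI[OF Rpc Alin b u xd])
  define q where "q = A xh - A u"
  have "(A xh - A u) \<bullet> (A u - A xh) = - (q \<bullet> q)" unfolding q_def
    by (metis inner_minus_right minus_diff_eq)
  then have "(1/b) * (q \<bullet> q) \<le> (1/a) * ((g - A xh) \<bullet> q)" using 1 2 unfolding q_def by simp
  also have "\<dots> \<le> (1/a) * (norm (g - A xh) * norm q)"
    using a by (intro mult_left_mono) (auto intro: norm_cauchy_schwarz)
  finally have 3: "(1/b) * (norm q)\<^sup>2 \<le> (1/a) * (norm (g - A xh) * norm q)" by (simp add: power2_norm_eq_inner)
  show ?thesis
  proof (cases "q = 0")
    case True then show ?thesis using a b unfolding q_def by simp
  next
    case False
    then have nq: "norm q > 0" by simp
    from 3 have "norm q * norm q \<le> ((b/a) * norm (g - A xh)) * norm q"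
      using a b by (simp add: field_simps power2_eq_square)
    from mult_right_le_imp_le[OF this nq] show ?thesis unfolding q_def by simp
  qed
qed

lemma weak_open: "open U \<Longrightarrow> openin weak_topology {y. y \<bullet> v \<in> U}"
  unfolding weak_topology_def openin_topology_generated_by_iff
  by (rule generate_topology_on.Basis) blast

lemma cont_inner:
  assumes tau: "topspace \<tau> = UNIV" and Acont: "continuous_map \<tau> weak_topology A"
  shows "continuous_map \<tau> euclideanreal (\<lambda>z. A z \<bullet> v)"
  unfolding continuous_map_def
proof (intro conjI allI impI)
  show "(\<lambda>z. A z \<bullet> v) \<in> topspace \<tau> \<rightarrow> topspace euclideanreal" by simp
  have W: "openin \<tau> {x \<in> topspace \<tau>. A x \<in> W}" if "openin weak_topology W" for W
    using Acont that unfolding continuous_map_def by blast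
  fix U assume "openin euclideanreal U"
  then have "openin weak_topology {y. y \<bullet> v \<in> U}" by (intro weak_open) simp
  from W[OF this] show "openin \<tau> {x \<in> topspace \<tau>. A x \<bullet> v \<in> U}" by simp
qed

lemma norm_le_iff_inner:
  fixes e :: "'y::real_inner"
  assumes "0 \<le> r"
  shows "norm e \<le> r \<longleftrightarrow> (\<forall>v. e \<bullet> v \<le> r * norm v)"
proof
  assume "norm e \<le> r"
  then show "\<forall>v. e \<bullet> v \<le> r * norm v"
    by (metis mult_right_mono norm_cauchy_schwarz norm_ge_zero order.trans)
next
  assume H: "\<forall>v. e \<bullet> v \<le> r * norm v"
  show "norm e \<le> r"
  proof (cases "e = 0")
    case True then show ?thesis using assms by simp
  next
    case False
    have "norm e * norm e \<le> r * norm e" using H[rule_format, of e] by (simp add: norm_eq_sqrt_inner[symmetric] power2_norm_eq_inner[symmetric] power2_eq_square)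
    then show ?thesis using False by (simp add: mult_right_le_imp_le)
  qed
qed

lemma closed_ball_pre:
  assumes tau: "topspace \<tau> = UNIV" and Acont: "continuous_map \<tau> weak_topology A" and r: "0 \<le> r"
  shows "closedin \<tau> {z. norm (y - A z) \<le> r}"
proof -
  have eq: "norm (y - A z) \<le> r \<longleftrightarrow> (\<forall>v. y \<bullet> v - r * norm v \<le> A z \<bullet> v)" for z
  proof -
    have "\<forall>v. ((y - A z) \<bullet> v \<le> r * norm v) = (y \<bullet> v - r * norm v \<le> A z \<bullet> v)"
      by (auto simp: inner_diff_left)
    then show ?thesis using norm_le_iff_inner[OF r, of "y - A z"] by simp
  qed
  have "{z. norm (y - A z) \<le> r} = \<Inter> (range (\<lambda>v. {z \<in> topspace \<tau>. A z \<bullet> v \<in> {s. y \<bullet> v - r * norm v \<le> s}}))"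
    using eq tau by auto
  also have "closedin \<tau> \<dots>"
  proof -
    have cl: "closedin \<tau> {z \<in> topspace \<tau>. c \<le> A z \<bullet> v}" for c v
      using closedin_continuous_map_preimage[OF cont_inner[OF tau Acont], of "{s. c \<le> s}" v] closed_atLeast[of c]
      by (simp add: atLeast_def)
    show ?thesis by (intro closedin_Inter) (use cl in auto)
  qed
  finally show ?thesis .
qed

lemma closed_sq_pre:
  assumes tau: "topspace \<tau> = UNIV" and Acont: "continuous_map \<tau> weak_topology A"
  shows "closedin \<tau> {z. (norm (y - A z))\<^sup>2 \<le> s}"
proof (cases "s < 0")
  case True
  have "\<not> (norm (y - A z))\<^sup>2 \<le> s" for z using True zero_le_power2[of "norm (y - A z)"] by linarith
  then have "{z. (norm (y - A z))\<^sup>2 \<le> s} = {}" by blast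
  then show ?thesis by simp
next
  case False
  have "(norm (y - A z))\<^sup>2 \<le> s \<longleftrightarrow> norm (y - A z) \<le> sqrt s" for z
  proof
    assume "(norm (y - A z))\<^sup>2 \<le> s" then show "norm (y - A z) \<le> sqrt s" by (rule real_le_rsqrt)
  next
    assume "norm (y - A z) \<le> sqrt s"
    then have "(norm (y - A z))\<^sup>2 \<le> (sqrt s)\<^sup>2" by (intro power_mono) auto
    then show "(norm (y - A z))\<^sup>2 \<le> s" using False by simp
  qed
  then have "{z. (norm (y - A z))\<^sup>2 \<le> s} = {z. norm (y - A z) \<le> sqrt s}" by blast
  then show ?thesis using closed_ball_pre[OF tau Acont] False by simp
qed

lemma R_le_T: "0 \<le> h \<Longrightarrow> R z \<le> ereal h + R z"
  by (cases "R z") auto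

lemma closed_T:
  fixes A :: "'x::real_vector \<Rightarrow> 'y::real_inner"
  assumes tau: "lc_hausdorff_tvs \<tau>"
    and Rcomp: "\<And>c::real. compactin \<tau> {z. R z \<le> ereal c}"
    and Acont: "continuous_map \<tau> weak_topology A" and b: "0 < b"
  shows "closedin \<tau> {z. Tfun A R b z y \<le> ereal t}"
proof -
  have top: "topspace \<tau> = UNIV" and haus: "Hausdorff_space \<tau>" using tau by (auto simp: lc_hausdorff_tvs_def)
  define h where "h z = 1 / (2 * b) * (norm (y - A z))\<^sup>2" for z
  have T: "Tfun A R b z y = ereal (h z) + R z" for z by (simp add: Tfun_def h_def)
  have o1: "openin \<tau> {z. s < h z}" for s
  proof -
    have "{z. s < h z} = topspace \<tau> - {z. (norm (y - A z))\<^sup>2 \<le> 2 * b * s}"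
      using b top by (auto simp: h_def field_simps)
    then show ?thesis using closed_sq_pre[OF top Acont] by (simp add: openin_diff)
  qed
  have o2: "openin \<tau> {z. ereal c < R z}" for c
  proof -
    have "{z. ereal c < R z} = topspace \<tau> - {z. R z \<le> ereal c}" using top by auto
    then show ?thesis using compactin_imp_closedin[OF haus Rcomp] by (simp add: openin_diff)
  qed
  have "openin \<tau> {z. ereal t < Tfun A R b z y}"
  proof (subst openin_subopen, intro ballI)
    fix z assume "z \<in> {z. ereal t < Tfun A R b z y}"
    then have zt: "ereal t < ereal (h z) + R z" by (simp add: T)
    have "\<exists>s. s < h z \<and> ereal (t - s) < R z"
    proof (cases "R z")
      case (real r)
      then show ?thesis using zt by (intro exI[of _ "h z - (h z + r - t) / 2"]) (auto simp: field_simps)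
    next
      case PInf then show ?thesis by (intro exI[of _ "h z - 1"]) auto
    next
      case MInf then show ?thesis using zt by auto
    qed
    then obtain s where s: "s < h z" "ereal (t - s) < R z" by blast
    show "\<exists>T. openin \<tau> T \<and> z \<in> T \<and> T \<subseteq> {z. ereal t < Tfun A R b z y}"
    proof (intro exI conjI)
      show "openin \<tau> ({z. s < h z} \<inter> {z. ereal (t - s) < R z})" using o1 o2 by blast
      show "z \<in> {z. s < h z} \<inter> {z. ereal (t - s) < R z}" using s by simp
      show "{z. s < h z} \<inter> {z. ereal (t - s) < R z} \<subseteq> {z. ereal t < Tfun A R b z y}"
      proof
        fix w assume w: "w \<in> {z. s < h z} \<inter> {z. ereal (t - s) < R z}"
        show "w \<in> {z. ereal t < Tfun A R b z y}"
          using w by (cases "R w") (auto simp: T)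
      qed
    qed
  qed
  moreover have "{z. Tfun A R b z y \<le> ereal t} = topspace \<tau> - {z. ereal t < Tfun A R b z y}"
    using top by auto
  ultimately show ?thesis by (metis closedin_diff closedin_topspace)
qed

lemma exist:
  fixes A :: "'x::real_vector \<Rightarrow> 'y::real_inner"
  assumes tau: "lc_hausdorff_tvs \<tau>" and Rpc: "proper_convex R"
    and Rcomp: "\<And>c::real. compactin \<tau> {z. R z \<le> ereal c}"
    and Acont: "continuous_map \<tau> weak_topology A" and b: "0 < b"
  shows "Rset A R b y \<noteq> {}"
proof -
  define T where "T z = Tfun A R b z y" for z
  define h where "h z = 1 / (2 * b) * (norm (y - A z))\<^sup>2" for z
  have hT: "T z = ereal (h z) + R z" for z by (simp add: Tfun_def h_def T_def)
  have h0: "0 \<le> h z" for z using b by (simp add: h_def)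
  have RT: "R z \<le> T z" for z unfolding hT using h0 by (rule R_le_T)
  obtain z0 where "R z0 < \<infinity>" using Rpc unfolding proper_convex_def by blast
  then have z0d: "z0 \<in> domR R" by (simp add: domR_def)
  obtain r0 where r0: "R z0 = ereal r0" using fin_dom[OF Rpc z0d] by blast
  define c0 where "c0 = h z0 + r0"
  have Tz0: "T z0 = ereal c0" by (simp add: hT r0 c0_def)
  define S where "S = {z. R z \<le> ereal c0}"
  define D where "D = {z'. z' \<in> domR R \<and> T z' \<le> T z0}"
  define f where "f z' = {z. T z \<le> T z'}" for z'
  have Tfin: "T z' = ereal (real_of_ereal (T z'))" if z'd: "z' \<in> domR R" for z'
  proof -
    obtain r where "R z' = ereal r" using fin_dom[OF Rpc z'd] by blast
    then show ?thesis by (simp add: hT)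
  qed
  have clf: "closedin \<tau> (f z')" if "z' \<in> D" for z'
  proof -
    have "f z' = {z. Tfun A R b z y \<le> ereal (real_of_ereal (T z'))}"
      using Tfin[of z'] that by (simp add: f_def D_def T_def)
    then show ?thesis using closed_T[OF tau Rcomp Acont b] by simp
  qed
  have comp: "compactin \<tau> S" unfolding S_def by (rule Rcomp)
  have "S \<inter> \<Inter> (f ` D) \<noteq> {}"
  proof (rule compactin_fip[THEN iffD1, OF comp, THEN conjunct2, rule_format], intro conjI allI impI)
    show "\<forall>C\<in>f ` D. closedin \<tau> C" using clf by blast
    fix F assume F: "finite F \<and> F \<subseteq> f ` D"
    then obtain D' where D': "D' \<subseteq> D" "finite D'" "F = f ` D'" by (meson finite_subset_image)
    show "S \<inter> \<Inter> F \<noteq> {}"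
    proof (cases "D' = {}")
      case True
      have "z0 \<in> S" using RT[of z0] by (simp add: S_def Tz0)
      then show ?thesis using True D' by auto
    next
      case False
      define M where "M = Min (T ` D')"
      have "M \<in> T ` D'" using False D' by (simp add: M_def)
      then obtain m where m: "m \<in> D'" "T m = M" by blast
      have Mle: "M \<le> T d" if "d \<in> D'" for d using D' that by (simp add: M_def)
      have "m \<in> S" using RT[of m] m D' by (auto simp: S_def D_def Tz0)
      moreover have "m \<in> \<Inter> F" using D' m Mle by (auto simp: f_def)
      ultimately show ?thesis by blast
    qed
  qed
  then obtain zs where zs: "zs \<in> S" "\<And>z'. z' \<in> D \<Longrightarrow> zs \<in> f z'" by blast
  have zsd: "zs \<in> domR R" using zs(1) by (auto simp: S_def domR_def)
  have "T zs \<le> T z" if "z \<in> domR R" for z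
  proof (cases "T z \<le> T z0")
    case True then show ?thesis using zs(2)[of z] that by (simp add: D_def f_def)
  next
    case False
    have "T zs \<le> T z0" using zs(2)[of z0] z0d by (simp add: D_def f_def)
    then show ?thesis using False by simp
  qed
  then have "zs \<in> Rset A R b y" using zsd by (simp add: Rset_def T_def)
  then show ?thesis by blast
qed

lemma xK_bound:
  assumes xK: "x \<in> Kset A R \<nu> \<rho>" and b: "0 < b" and w: "w \<in> Rset A R b (A x)"
  shows "norm (A x - A w) \<le> \<rho> * b powr \<nu>"
proof -
  have "ereal (b powr (-\<nu>) * norm (A x - A w)) \<le> rho_nu A R \<nu> x"
    unfolding rho_nu_def by (rule Sup_upper) (use b w in blast)
  also have "\<dots> \<le> ereal \<rho>" using xK by (simp add: Kset_def)
  finally have 1: "b powr (-\<nu>) * norm (A x - A w) \<le> \<rho>" by simp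
  have "norm (A x - A w) = b powr \<nu> * (b powr (-\<nu>) * norm (A x - A w))"
    using b by (simp add: powr_minus field_simps)
  also have "\<dots> \<le> b powr \<nu> * \<rho>" using 1 by (intro mult_left_mono) auto
  finally show ?thesis by (simp add: mult.commute)
qed

lemma basic:
  fixes A :: "'x::real_vector \<Rightarrow> 'y::real_inner"
  assumes Rpc: "proper_convex R" and Alin: "linear A"
    and ex: "\<And>b y. 0 < b \<Longrightarrow> Rset A R b y \<noteq> {}"
    and xK: "x \<in> Kset A R \<nu> \<rho>"
    and noise: "norm (g - A x) \<le> \<delta>"
    and alpha: "0 < \<alpha>" and xh: "xh \<in> Rset A R \<alpha> g"
  shows "norm (g - A xh) \<le> \<delta> + \<rho> * \<alpha> powr \<nu>" "norm (A x - A xh) \<le> \<delta> + \<rho> * \<alpha> powr \<nu>"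
proof -
  obtain w where w: "w \<in> Rset A R \<alpha> (A x)" using ex[OF alpha] by blast
  have 1: "norm ((g - A xh) - (A x - A w)) \<le> \<delta>" "norm (A xh - A w) \<le> \<delta>"
    using FNE[OF Rpc Alin alpha xh w] noise by auto
  have 2: "norm (A x - A w) \<le> \<rho> * \<alpha> powr \<nu>" by (rule xK_bound[OF xK alpha w])
  have "norm (g - A xh) \<le> norm ((g - A xh) - (A x - A w)) + norm (A x - A w)"
    by (metis diff_add_cancel norm_triangle_ineq)
  then show "norm (g - A xh) \<le> \<delta> + \<rho> * \<alpha> powr \<nu>" using 1 2 by linarith
  have "norm (A x - A xh) \<le> norm (A x - A w) + norm (A w - A xh)"
    by (rule norm_diff_triangle_le[of _ "A w"]) simp_all
  then show "norm (A x - A xh) \<le> \<delta> + \<rho> * \<alpha> powr \<nu>" using 1 2 by (simp add: norm_minus_commute)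
qed

lemma Kmem:
  fixes A :: "'x::real_vector \<Rightarrow> 'y::real_inner"
  assumes Rpc: "proper_convex R" and Alin: "linear A"
    and ex: "\<And>b y. 0 < b \<Longrightarrow> Rset A R b y \<noteq> {}"
    and nu: "0 < \<nu>" "\<nu> \<le> 1" and rho: "0 < \<rho>" and delta: "0 < \<delta>"
    and xK: "x \<in> Kset A R \<nu> \<rho>"
    and noise: "norm (g - A x) \<le> \<delta>"
    and alpha: "0 < \<alpha>" and xh: "xh \<in> Rset A R \<alpha> g"
    and kap: "\<alpha> powr (-\<nu>) * \<delta> \<le> \<kappa> * \<rho>"
  shows "xh \<in> Kset A R \<nu> ((2 + \<kappa>) * \<rho>)"
proof -
  note B = basic[OF Rpc Alin ex xK noise alpha xh]
  have aa: "\<alpha> powr (-\<nu>) * (\<rho> * \<alpha> powr \<nu>) = \<rho>" using alpha by (simp add: powr_minus field_simps)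
  have "b powr (-\<nu>) * norm (A xh - A u) \<le> (2 + \<kappa>) * \<rho>" if b: "0 < b" and u: "u \<in> Rset A R b (A xh)" for b u
  proof (cases "b \<le> \<alpha>")
    case True
    have e1: "norm (A xh - A u) \<le> (b / \<alpha>) * norm (g - A xh)" by (rule E1[OF Rpc Alin alpha b xh u])
    have "b powr (-\<nu>) * norm (A xh - A u) \<le> b powr (-\<nu>) * ((b / \<alpha>) * norm (g - A xh))"
      using e1 by (intro mult_left_mono) auto
    also have "\<dots> = (b powr (1 - \<nu>) / \<alpha>) * norm (g - A xh)"
      using b by (simp add: powr_diff powr_minus field_simps)
    also have "\<dots> \<le> (\<alpha> powr (1 - \<nu>) / \<alpha>) * norm (g - A xh)"
      using True b nu alpha by (intro mult_right_mono divide_right_mono powr_mono2) auto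
    also have "\<dots> = \<alpha> powr (-\<nu>) * norm (g - A xh)"
      using alpha by (simp add: powr_diff powr_minus field_simps)
    also have "\<dots> \<le> \<alpha> powr (-\<nu>) * (\<delta> + \<rho> * \<alpha> powr \<nu>)"
      using B(1) by (intro mult_left_mono) auto
    also have "\<dots> = \<alpha> powr (-\<nu>) * \<delta> + \<rho>" using aa by (simp add: distrib_left)
    also have "\<dots> \<le> (2 + \<kappa>) * \<rho>" using kap rho by (simp add: algebra_simps)
    finally show ?thesis .
  next
    case False
    obtain w where w: "w \<in> Rset A R b (A x)" using ex[OF b] by blast
    have f: "norm ((A xh - A u) - (A x - A w)) \<le> norm (A xh - A x)"
      using FNE(1)[OF Rpc Alin b u w] .
    have 2: "norm (A x - A w) \<le> \<rho> * b powr \<nu>" by (rule xK_bound[OF xK b w])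
    have "norm (A xh - A u) \<le> norm ((A xh - A u) - (A x - A w)) + norm (A x - A w)"
      by (metis diff_add_cancel norm_triangle_ineq)
    also have "\<dots> \<le> (\<delta> + \<rho> * \<alpha> powr \<nu>) + \<rho> * b powr \<nu>"
      using f 2 B(2) by (simp add: norm_minus_commute)
    finally have n: "norm (A xh - A u) \<le> (\<delta> + \<rho> * \<alpha> powr \<nu>) + \<rho> * b powr \<nu>" .
    have bm: "b powr (-\<nu>) \<le> \<alpha> powr (-\<nu>)"
      using False alpha nu by (intro powr_mono2') auto
    have "b powr (-\<nu>) * norm (A xh - A u) \<le> b powr (-\<nu>) * ((\<delta> + \<rho> * \<alpha> powr \<nu>) + \<rho> * b powr \<nu>)"
      using n by (intro mult_left_mono) auto
    also have "\<dots> = b powr (-\<nu>) * (\<delta> + \<rho> * \<alpha> powr \<nu>) + \<rho>"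
      using b by (simp add: powr_minus field_simps)
    also have "\<dots> \<le> \<alpha> powr (-\<nu>) * (\<delta> + \<rho> * \<alpha> powr \<nu>) + \<rho>"
      using bm delta rho by (intro add_right_mono mult_right_mono) auto
    also have "\<dots> = \<alpha> powr (-\<nu>) * \<delta> + \<rho> + \<rho>" using aa by (simp add: distrib_left)
    also have "\<dots> \<le> (2 + \<kappa>) * \<rho>" using kap rho by (simp add: algebra_simps)
    finally show ?thesis .
  qed
  then show ?thesis
    unfolding Kset_def rho_nu_def by (auto intro!: Sup_least)
qed

lemma Kmono: "x \<in> Kset A R \<nu> \<rho> \<Longrightarrow> \<rho> \<le> \<rho>' \<Longrightarrow> x \<in> Kset A R \<nu> \<rho>'"
  by (auto simp: Kset_def intro: order.trans)

lemma mod_upper: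
  assumes "x1 \<in> K" "x2 \<in> K" "norm (A x1 - A x2) \<le> d"
  shows "L x1 x2 \<le> modulus L A d K"
  unfolding modulus_def by (rule Sup_upper) (use assms in blast)

theorem theorem1:
  fixes \<tau> :: "('x::banach) topology"
    and R :: "'x \<Rightarrow> ereal"
    and A :: "'x \<Rightarrow> 'y::{real_inner, complete_space}"
    and L :: "'x \<Rightarrow> 'x \<Rightarrow> ereal"
    and \<nu> \<rho> \<delta> \<alpha> :: real and x xh :: 'x and g\<delta> :: 'y
  assumes tau: "lc_hausdorff_tvs \<tau>"
    and Rpc: "proper_convex R"
    and Rcomp: "\<And>c::real. compactin \<tau> {z. R z \<le> ereal c}"
    and Alin: "linear A"
    and Acont: "continuous_map \<tau> weak_topology A"
    and Lnn: "\<And>a b. L a b \<ge> 0"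
    and Ltri: "\<And>a b c. L a c \<le> L a b + L b c"
    and nu: "0 < \<nu>" "\<nu> \<le> 1"
    and rho: "0 < \<rho>" and delta: "0 < \<delta>"
    and xK: "x \<in> Kset A R \<nu> \<rho>"
    and noise: "norm (g\<delta> - A x) \<le> \<delta>"
    and alpha: "0 < \<alpha>"
    and xh: "xh \<in> Rset A R \<alpha> g\<delta>"
  shows "(\<forall>cl cr. 0 < cl \<and> cl \<le> cr \<and>
            cl * \<rho> powr (-1/\<nu>) * \<delta> powr (1/\<nu>) \<le> \<alpha> \<and>
            \<alpha> \<le> cr * \<rho> powr (-1/\<nu>) * \<delta> powr (1/\<nu>) \<longrightarrow>
            L x xh \<le> modulus L A ((1 + cr powr \<nu>) * \<delta>) (Kset A R \<nu> ((2 + cl powr (-\<nu>)) * \<rho>)))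
       \<and> (\<forall>cD CD. 1 < cD \<and> cD < CD \<and>
            cD * \<delta> \<le> norm (g\<delta> - A xh) \<and> norm (g\<delta> - A xh) \<le> CD * \<delta> \<longrightarrow>
            L x xh \<le> modulus L A ((1 + CD) * \<delta>) (Kset A R \<nu> ((2 + 1 / (cD - 1)) * \<rho>)))"
proof (intro conjI allI impI)
  have ex: "\<And>b y. 0 < b \<Longrightarrow> Rset A R b y \<noteq> {}"
    by (rule exist[OF tau Rpc Rcomp Acont])
  note B = basic[OF Rpc Alin ex xK noise alpha xh]
  note KM = Kmem[OF Rpc Alin ex nu rho delta xK noise alpha xh]
  have pw: "(c * \<rho> powr (-1/\<nu>) * \<delta> powr (1/\<nu>)) powr \<nu> = c powr \<nu> * \<delta> / \<rho>" if "0 < c" for c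
  proof -
    have "(c * \<rho> powr (-1/\<nu>) * \<delta> powr (1/\<nu>)) powr \<nu> = c powr \<nu> * (\<rho> powr (-1/\<nu>)) powr \<nu> * (\<delta> powr (1/\<nu>)) powr \<nu>"
      using that rho delta by (simp add: powr_mult)
    also have "\<dots> = c powr \<nu> * \<rho> powr (-1) * \<delta> powr 1"
      using nu by (simp add: powr_powr)
    also have "\<dots> = c powr \<nu> * \<delta> / \<rho>"
      using rho delta by (simp add: powr_minus divide_inverse)
    finally show ?thesis .
  qed
  {
    fix cl cr :: real
    assume H: "0 < cl \<and> cl \<le> cr \<and> cl * \<rho> powr (-1/\<nu>) * \<delta> powr (1/\<nu>) \<le> \<alpha> \<and> \<alpha> \<le> cr * \<rho> powr (-1/\<nu>) * \<delta> powr (1/\<nu>)"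
    then have cl: "0 < cl" and cr: "0 < cr" by auto
    have "cl powr \<nu> * \<delta> / \<rho> \<le> \<alpha> powr \<nu>"
      using H powr_mono2[of \<nu> "cl * \<rho> powr (-1/\<nu>) * \<delta> powr (1/\<nu>)" \<alpha>] nu pw[OF cl] cl by auto
    then have "cl powr \<nu> * \<delta> \<le> \<rho> * \<alpha> powr \<nu>" using rho by (simp add: field_simps)
    then have "\<alpha> powr (-\<nu>) * (cl powr \<nu> * \<delta>) \<le> \<alpha> powr (-\<nu>) * (\<rho> * \<alpha> powr \<nu>)"
      by (intro mult_left_mono) auto
    then have "\<alpha> powr (-\<nu>) * \<delta> * cl powr \<nu> \<le> \<rho>" using alpha by (simp add: powr_minus field_simps)
    then have k: "\<alpha> powr (-\<nu>) * \<delta> \<le> cl powr (-\<nu>) * \<rho>"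
      using cl by (simp add: powr_minus field_simps)
    have xhK: "xh \<in> Kset A R \<nu> ((2 + cl powr (-\<nu>)) * \<rho>)" using KM k by blast
    have xK2: "x \<in> Kset A R \<nu> ((2 + cl powr (-\<nu>)) * \<rho>)"
      using rho by (intro Kmono[OF xK]) (simp add: algebra_simps add_pos_nonneg)
    have "\<alpha> powr \<nu> \<le> cr powr \<nu> * \<delta> / \<rho>"
      using H powr_mono2[of \<nu> \<alpha> "cr * \<rho> powr (-1/\<nu>) * \<delta> powr (1/\<nu>)"] nu pw[OF cr] alpha by auto
    then have "\<rho> * \<alpha> powr \<nu> \<le> cr powr \<nu> * \<delta>" using rho by (simp add: field_simps)
    then have "norm (A x - A xh) \<le> (1 + cr powr \<nu>) * \<delta>" using B(2) by (simp add: algebra_simps)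
    then show "L x xh \<le> modulus L A ((1 + cr powr \<nu>) * \<delta>) (Kset A R \<nu> ((2 + cl powr (-\<nu>)) * \<rho>))"
      by (rule mod_upper[OF xK2 xhK])
  }
  {
    fix cD CD :: real
    assume H: "1 < cD \<and> cD < CD \<and> cD * \<delta> \<le> norm (g\<delta> - A xh) \<and> norm (g\<delta> - A xh) \<le> CD * \<delta>"
    then have "(cD - 1) * \<delta> \<le> \<rho> * \<alpha> powr \<nu>" using B(1) by (simp add: algebra_simps)
    then have "\<alpha> powr (-\<nu>) * ((cD - 1) * \<delta>) \<le> \<alpha> powr (-\<nu>) * (\<rho> * \<alpha> powr \<nu>)"
      by (intro mult_left_mono) auto
    then have "\<alpha> powr (-\<nu>) * \<delta> * (cD - 1) \<le> \<rho>" using alpha by (simp add: powr_minus field_simps)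
    then have k: "\<alpha> powr (-\<nu>) * \<delta> \<le> 1 / (cD - 1) * \<rho>"
      using H by (simp add: field_simps)
    have xhK: "xh \<in> Kset A R \<nu> ((2 + 1 / (cD - 1)) * \<rho>)" using KM k by blast
    have xK2: "x \<in> Kset A R \<nu> ((2 + 1 / (cD - 1)) * \<rho>)"
      using rho H by (intro Kmono[OF xK]) (simp add: algebra_simps)
    have "norm (A x - A xh) \<le> norm (A x - g\<delta>) + norm (g\<delta> - A xh)"
      by (rule norm_diff_triangle_le[of _ g\<delta>]) simp_all
    then have "norm (A x - A xh) \<le> (1 + CD) * \<delta>" using noise H by (simp add: norm_minus_commute algebra_simps)
    then show "L x xh \<le> modulus L A ((1 + CD) * \<delta>) (Kset A R \<nu> ((2 + 1 / (cD - 1)) * \<rho>))"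
      by (rule mod_upper[OF xK2 xhK])
  }
qed
end
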